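(* Let $K=(K_{xy})$ be a real $n\times n$ matrix and define the matrix $\mathcal D=(d_{xy})$ by $$\mathcal D=\tfrac12\big(\operatorname{diag}(K)\cdot\mathbf 1^T+\mathbf 1\cdot\operatorname{diag}(K)^T\big)-K,$$ i.e. $d_{xy}=\tfrac12(K_{xx}+K_{yy})-K_{xy}$, where $\operatorname{diag}(K)$ is the column vector of diagonal entries of $K$ and $\mathbf 1=(1,\dots,1)^T$. If $\mathcal D$ has a negative entry, or if $\sqrt{d_{xy}}+\sqrt{d_{yz}}<\sqrt{d_{xz}}$ for some $x,y,z\in\{1,\dots,n\}$, then the function $\kappa(x,y)=K_{xy}$, $x,y\in\{1,\dots,n\}$, is not a proximity on $\{1,\dots,n\}$.
   Context: A proximity measure (proximity) on a set $A$ is a function $\kappa:A\times A\to\mathbb R$ satisfying the triangle inequality for proximities: for all $x,y,z\in A$, $\kappa(x,y)+\kappa(x,z)-\kappa(y,z)\le\kappa(x,x)$, and if $z=y$ and $y\neq x$ then this inequality is strict. *)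

theory Defs
  imports "HOL-Analysis.Analysis"
begin

definition proximity :: "'a set \<Rightarrow> ('a \<Rightarrow> 'a \<Rightarrow> real) \<Rightarrow> bool" where
  "proximity A \<kappa> \<longleftrightarrow>
     (\<forall>x\<in>A. \<forall>y\<in>A. \<forall>z\<in>A. \<kappa> x y + \<kappa> x z - \<kappa> y z \<le> \<kappa> x x) \<and>
     (\<forall>x\<in>A. \<forall>y\<in>A. y \<noteq> x \<longrightarrow> \<kappa> x y + \<kappa> x y - \<kappa> y y < \<kappa> x x)"

definition dmat :: "real^'n^'n \<Rightarrow> real^'n^'n" where
  "dmat K = (\<chi> x y. (K$x$x + K$y$y) / 2 - K$x$y)"

end

theory Submission
  imports Defs
begin

theorem corollary1:
  fixes K :: "real^'n^'n"
  assumes "(\<exists>x y. dmat K $ x $ y < 0) \<or>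
           (\<exists>x y z. sqrt (dmat K $ x $ y) + sqrt (dmat K $ y $ z) < sqrt (dmat K $ x $ z))"
  shows "\<not> proximity UNIV (\<lambda>x y. K $ x $ y)"
proof
  assume P: "proximity UNIV (\<lambda>x y. K $ x $ y)"
  have T: "\<And>a b c. K$a$b + K$a$c - K$b$c \<le> K$a$a" using P unfolding proximity_def by blast
  have D: "\<And>a b. dmat K $ a $ b = (K$a$a + K$b$b) / 2 - K$a$b" unfolding dmat_def by simp
  have tri: "\<And>a b c. dmat K $ b $ c \<le> dmat K $ a $ b + dmat K $ a $ c"
    proof -
    fix a b c show "dmat K $ b $ c \<le> dmat K $ a $ b + dmat K $ a $ c"
      using T[of a b c] unfolding D by (simp add: field_simps)
  qed
  have nn: "\<And>a b. dmat K $ a $ b \<ge> 0" 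
  proof -
    fix a b show "dmat K $ a $ b \<ge> 0" using tri[where a=a and b=b and c=b] by (simp add: D)
  qed
  have sym: "\<And>a b. dmat K $ a $ b = dmat K $ b $ a"
  proof -
    fix a b show "dmat K $ a $ b = dmat K $ b $ a"
      using tri[where a=b and b=a and c=b] tri[where a=a and b=b and c=a] by (simp add: D)
  qed
  have sq: "\<And>x y z. sqrt (dmat K $ x $ z) \<le> sqrt (dmat K $ x $ y) + sqrt (dmat K $ y $ z)"
  proof -
    fix x y z
    have "dmat K $ x $ z \<le> dmat K $ x $ y + dmat K $ y $ z" using tri[where a=y and b=x and c=z] sym by simp
    also have "\<dots> \<le> (sqrt (dmat K $ x $ y) + sqrt (dmat K $ y $ z))^2"
      using nn[of x y] nn[of y z] by (simp add: power2_eq_square algebra_simps)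
    finally show "sqrt (dmat K $ x $ z) \<le> sqrt (dmat K $ x $ y) + sqrt (dmat K $ y $ z)"
      by (simp add: real_le_lsqrt real_sqrt_le_iff nn)
  qed
  show False using assms nn sq by (meson not_less)
qed

end
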